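(* Let ${\bf r}=(r_0,r_1,\dots)$ be a finitely supported sequence of nonnegative integers with $n=\sum_{d\ge1}r_d$, and let $k\ge0$ be an integer. Then $$|\mathcal{CF}_{{\bf r},k}|=\sum_{F\in\mathscr F({\bf r})}n!\prod_{v\in I(F)}\Big((d_v+k)-\frac{k}{h_v}\Big).$$
   Context: A plane tree is an unlabelled rooted tree in which the children of every vertex are linearly ordered; a plane forest is a finite linearly ordered sequence of plane trees. For vertices $u,v$ in a tree, $v$ is a descendant of $u$ if $u$ lies on the path from the root to $v$ (so $u$ is a descendant of itself). The degree $d_v$ is the number of children of $v$; $v$ is internal if $d_v\ge1$. $I(F)$ is the set of internal vertices of $F$. The hook length $h_v$ of an internal vertex $v$ is the number of internal vertices among the descendants of $v$ (including $v$). A plane forest has type ${\bf r}$ if it has exactly $r_i$ vertices of degree $i$ for all $i\ge0$; $\mathscr F({\bf r})$ is the set of such forests, and $n=\sum_{d\ge1}r_d$ is the number of internal vertices. A labelled forest is a plane forest $F$ together with a bijection (labelling) $I(F)\to[n]$. An internal vertex $v$ of a labelled forest is proper if no internal descendant of $v$ has a smaller label than $v$, and improper otherwise. Fix colors $c_1,c_2,\dots$ and distinct special colors $c_1',c_2',\dots$. A proper $k$-coloring of a labelled forest assigns to each internal vertex $v$ a color, taken from $\{c_1,\dots,c_{d_v}\}$ if $v$ is proper and from $\{c_1,\dots,c_{d_v}\}\cup\{c_1',\dots,c_k'\}$ if $v$ is improper. A $k$-colored labelled forest is a labelled forest together with a proper $k$-coloring; $\mathcal{CF}_{{\bf r},k}$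 is the set of $k$-colored labelled forests whose underlying plane forest has type ${\bf r}$. *)

theory Defs
  imports "HOL-Library.FuncSet" Complex_Main
begin

datatype ptree = Node "ptree list"

fun kids :: "ptree \<Rightarrow> ptree list" where
  "kids (Node cs) = cs"

fun tget :: "ptree \<Rightarrow> nat list \<Rightarrow> ptree option" where
  "tget t [] = Some t"
| "tget (Node cs) (i # p) = (if i < length cs then tget (cs ! i) p else None)"

text \<open>Vertices of a forest F are the nonempty paths in the tree Node F (the first index
  selects the tree of the forest).\<close>
definition verts :: "ptree list \<Rightarrow> nat list set" where
  "verts F = {p. p \<noteq> [] \<and> tget (Node F) p \<noteq> None}"

definition deg :: "ptree list \<Rightarrow> nat list \<Rightarrow> nat" where
  "deg F v = length (kids (the (tget (Node F) v)))"

definition internal :: "ptree list \<Rightarrow> nat list set" where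
  "internal F = {v \<in> verts F. 1 \<le> deg F v}"

definition desc :: "nat list \<Rightarrow> nat list \<Rightarrow> bool" where
  "desc w v \<longleftrightarrow> (\<exists>x. w = v @ x)"

definition hook :: "ptree list \<Rightarrow> nat list \<Rightarrow> nat" where
  "hook F v = card {w \<in> internal F. desc w v}"

definition has_type :: "ptree list \<Rightarrow> (nat \<Rightarrow> nat) \<Rightarrow> bool" where
  "has_type F r \<longleftrightarrow> (\<forall>i. card {v \<in> verts F. deg F v = i} = r i)"

definition forests :: "(nat \<Rightarrow> nat) \<Rightarrow> ptree list set" where
  "forests r = {F. has_type F r}"

definition num_internal :: "(nat \<Rightarrow> nat) \<Rightarrow> nat" where
  "num_internal r = (\<Sum>d \<in> {d. 1 \<le> d \<and> r d \<noteq> 0}. r d)"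

definition proper :: "ptree list \<Rightarrow> (nat list \<Rightarrow> nat) \<Rightarrow> nat list \<Rightarrow> bool" where
  "proper F lab v \<longleftrightarrow> (\<forall>w \<in> internal F. desc w v \<longrightarrow> lab v \<le> lab w)"

text \<open>Colours: C i is c_i, C' j is the special colour c'_j.\<close>
datatype color = C nat | C' nat

definition allowed :: "nat \<Rightarrow> ptree list \<Rightarrow> (nat list \<Rightarrow> nat) \<Rightarrow> nat list \<Rightarrow> color set" where
  "allowed k F lab v =
     {C i | i. 1 \<le> i \<and> i \<le> deg F v} \<union>
     (if proper F lab v then {} else {C' j | j. 1 \<le> j \<and> j \<le> k})"

definition CF :: "(nat \<Rightarrow> nat) \<Rightarrow> nat \<Rightarrow> (ptree list \<times> (nat list \<Rightarrow> nat) \<times> (nat list \<Rightarrow> color)) set" where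
  "CF r k = {(F, lab, col). F \<in> forests r \<and>
       lab \<in> extensional (internal F) \<and> bij_betw lab (internal F) {1..num_internal r} \<and>
       col \<in> (\<Pi>\<^sub>E v \<in> internal F. allowed k F lab v)}"

end

theory Submission
  imports Defs "HOL-Combinatorics.Permutations"
begin


definition Labs :: "'a set \<Rightarrow> ('a \<Rightarrow> nat) set" where
  "Labs I = {lab \<in> extensional I. bij_betw lab I {1..card I}}"

definition sw :: "'a \<Rightarrow> 'a \<Rightarrow> 'a \<Rightarrow> 'a" where
  "sw v w x = (if x = v then w else if x = w then v else x)"

lemma sw_sw[simp]: "sw v w (sw v w x) = x" by (simp add: sw_def)

lemma sw_in: "v \<in> A \<Longrightarrow> w \<in> A \<Longrightarrow> x \<in> A \<Longrightarrow> sw v w x \<in> A" by (simp add: sw_def)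

lemma bij_sw: "v \<in> A \<Longrightarrow> w \<in> A \<Longrightarrow> bij_betw (sw v w) A A"
  by (rule bij_betw_byWitness[where f'="sw v w"]) (auto simp: sw_in)

lemma Labs_sw: assumes "lab \<in> Labs I" "v \<in> I" "w \<in> I" shows "lab \<circ> sw v w \<in> Labs I"
proof -
  have "bij_betw (lab \<circ> sw v w) I {1..card I}"
    using assms bij_sw[of v I w] by (auto simp: Labs_def intro: bij_betw_trans)
  moreover have "lab \<circ> sw v w \<in> extensional I"
    using assms by (auto simp: Labs_def extensional_def sw_def)
  ultimately show ?thesis by (simp add: Labs_def)
qed

lemma card_Labs: assumes "finite I" shows "card (Labs I) = fact (card I)"
proof -
  obtain lab0 where l0: "bij_betw lab0 I {1..card I}"
    using assms by (metis bij_betw_iff_card card_atLeastAtMost diff_Suc_1 finite_atLeastAtMost)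
  let ?f = "\<lambda>p. restrict (lab0 \<circ> p) I"
  have inj: "inj_on ?f {p. p permutes I}"
  proof (rule inj_onI)
    fix p q assume p: "p \<in> {p. p permutes I}" and q: "q \<in> {p. p permutes I}" and e: "?f p = ?f q"
    show "p = q"
    proof
      fix x show "p x = q x"
      proof (cases "x \<in> I")
        case True
        then have "lab0 (p x) = lab0 (q x)" using fun_cong[OF e, of x] by simp
        moreover have "p x \<in> I" "q x \<in> I" using p q True by (auto simp: permutes_in_image)
        ultimately show ?thesis using l0 by (auto simp: bij_betw_def inj_on_def)
      next
        case False then show ?thesis using p q by (simp add: permutes_not_in)
      qed
    qed
  qed
  have img: "?f ` {p. p permutes I} = Labs I"
  proof
    show "?f ` {p. p permutes I} \<subseteq> Labs I"
    proof clarify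
      fix p assume p: "p permutes I"
      have "bij_betw p I I" using p by (rule permutes_imp_bij)
      then have "bij_betw (lab0 \<circ> p) I {1..card I}" using l0 by (rule bij_betw_trans)
      then have "bij_betw (?f p) I {1..card I}" by (rule bij_betw_cong[THEN iffD1, rotated]) simp
      then show "?f p \<in> Labs I" by (simp add: Labs_def)
    qed
  next
    show "Labs I \<subseteq> ?f ` {p. p permutes I}"
    proof
      fix lab assume lab: "lab \<in> Labs I"
      define p where "p = (\<lambda>x. if x \<in> I then inv_into I lab0 (lab x) else x)"
      have "bij_betw (inv_into I lab0 \<circ> lab) I I"
        using lab l0 by (auto simp: Labs_def intro: bij_betw_trans bij_betw_inv_into)
      then have "bij_betw p I I" by (rule bij_betw_cong[THEN iffD1, rotated]) (simp add: p_def)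
      then have "p permutes I" by (rule bij_imp_permutes) (simp add: p_def)
      moreover have "?f p = lab"
      proof
        fix x show "?f p x = lab x"
        proof (cases "x \<in> I")
          case True
          then have "lab x \<in> lab0 ` I" using lab l0 by (auto simp: Labs_def bij_betw_def)
          then show ?thesis using True by (simp add: p_def f_inv_into_f)
        next
          case False then show ?thesis using lab by (auto simp: Labs_def extensional_def)
        qed
      qed
      ultimately show "lab \<in> ?f ` {p. p permutes I}" by force
    qed
  qed
  have "card (Labs I) = card {p. p permutes I}" using card_image[OF inj] img by simp
  also have "\<dots> = fact (card I)" using assms card_permutations by blast
  finally show ?thesis .
qed

locale forest_ord =
  fixes I :: "'a set" and R :: "'a \<Rightarrow> 'a \<Rightarrow> bool"
  assumes fin: "finite I"
    and rfl: "v \<in> I \<Longrightarrow> R v v"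
    and trns: "u \<in> I \<Longrightarrow> v \<in> I \<Longrightarrow> w \<in> I \<Longrightarrow> R u v \<Longrightarrow> R v w \<Longrightarrow> R u w"
    and asym: "v \<in> I \<Longrightarrow> w \<in> I \<Longrightarrow> R v w \<Longrightarrow> R w v \<Longrightarrow> v = w"
    and frst: "x \<in> I \<Longrightarrow> v \<in> I \<Longrightarrow> w \<in> I \<Longrightarrow> R x v \<Longrightarrow> R x w \<Longrightarrow> R v w \<or> R w v"
begin

definition D where "D v = {w \<in> I. R w v}"
definition prp where "prp lab v = (\<forall>w\<in>I. R w v \<longrightarrow> lab v \<le> lab w)"
definition A where "A S = {lab \<in> Labs I. \<forall>v\<in>S. prp lab v}"

lemma finD: "finite (D v)" using fin by (simp add: D_def)

lemma cardD_pos: "v \<in> I \<Longrightarrow> card (D v) > 0"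
  using finD[of v] rfl[of v] by (auto simp: D_def card_gt_0_iff)

lemma pres:
  assumes S: "S \<subseteq> I" "v \<in> S" and minv: "\<forall>s\<in>S. R s v \<longrightarrow> s = v"
    and w: "w \<in> I" "R w v" and lab: "\<forall>s\<in>S-{v}. prp lab s"
  shows "\<forall>s\<in>S-{v}. prp (lab \<circ> sw v w) s"
proof
  fix s assume s: "s \<in> S - {v}"
  have sI: "s \<in> I" and vI: "v \<in> I" using s S by auto
  have "s \<noteq> w" using s w minv by auto
  then have sws: "sw v w s = s" using s by (auto simp: sw_def)
  have ps: "prp lab s" using lab s by blast
  show "prp (lab \<circ> sw v w) s"
    unfolding prp_def
  proof (intro ballI impI)
    fix u assume u: "u \<in> I" "R u s"
    show "(lab \<circ> sw v w) s \<le> (lab \<circ> sw v w) u"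
    proof (cases "u = v")
      case True
      then have "R w s" using trns[of w v s] w u vI sI by auto
      then show ?thesis using True ps w sws by (auto simp: prp_def sw_def)
    next
      case nv: False
      show ?thesis
      proof (cases "u = w")
        case True
        then have "R v s \<or> R s v" using frst[of w v s] w u vI sI by auto
        then have "R v s" using minv s by auto
        then show ?thesis using True nv ps vI sws by (auto simp: prp_def sw_def)
      next
        case False
        then show ?thesis using nv ps u sws by (auto simp: prp_def sw_def)
      qed
    qed
  qed
qed

lemma step:
  assumes S: "S \<subseteq> I" "v \<in> S" and minv: "\<forall>s\<in>S. R s v \<longrightarrow> s = v"
  shows "card (A (S - {v})) = card (D v) * card (A S)"
proof -
  have vI: "v \<in> I" using S by auto
  let ?g = "\<lambda>w lab. lab \<circ> sw v w"
  have finA: "finite (A S)"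
  proof -
    have "A S \<subseteq> Labs I" by (auto simp: A_def)
    moreover have "finite (Labs I)" using card_Labs[OF fin] by (simp add: card_ge_0_finite)
    ultimately show ?thesis by (rule finite_subset)
  qed
  have eq: "A (S - {v}) = (\<Union>w\<in>D v. ?g w ` A S)"
  proof
    show "(\<Union>w\<in>D v. ?g w ` A S) \<subseteq> A (S - {v})"
    proof clarify
      fix w lab assume w: "w \<in> D v" and lab: "lab \<in> A S"
      have "\<forall>s\<in>S-{v}. prp (lab \<circ> sw v w) s"
        by (rule pres[OF S minv]) (use w lab in \<open>auto simp: D_def A_def\<close>)
      then show "lab \<circ> sw v w \<in> A (S - {v})"
        using Labs_sw[of lab I v w] lab w vI by (auto simp: A_def D_def)
    qed
  next
    show "A (S - {v}) \<subseteq> (\<Union>w\<in>D v. ?g w ` A S)"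
    proof
      fix lab' assume lab': "lab' \<in> A (S - {v})"
      have ne: "lab' ` D v \<noteq> {}" using vI rfl[of v] by (auto simp: D_def)
      have "Min (lab' ` D v) \<in> lab' ` D v" using ne finD by (intro Min_in) auto
      then obtain w where w: "w \<in> D v" "lab' w = Min (lab' ` D v)" by auto
      have wI: "w \<in> I" "R w v" using w by (auto simp: D_def)
      define lab where "lab = lab' \<circ> sw v w"
      have L: "lab \<in> Labs I" using Labs_sw[of lab' I v w] lab' vI wI by (auto simp: A_def lab_def)
      have p1: "\<forall>s\<in>S-{v}. prp lab s"
        unfolding lab_def by (rule pres[OF S minv wI]) (use lab' in \<open>auto simp: A_def\<close>)
      have p2: "prp lab v"
        unfolding prp_def
      proof (intro ballI impI)
        fix u assume u: "u \<in> I" "R u v"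
        have "sw v w u \<in> D v" using u wI vI rfl[of v] by (auto simp: sw_def D_def)
        then have "Min (lab' ` D v) \<le> lab' (sw v w u)" using finD by auto
        then show "lab v \<le> lab u" using w by (simp add: lab_def sw_def)
      qed
      have "lab \<in> A S" using L p1 p2 by (auto simp: A_def)
      moreover have "lab' = ?g w lab" by (auto simp: lab_def)
      ultimately show "lab' \<in> (\<Union>w\<in>D v. ?g w ` A S)" using w by blast
    qed
  qed
  have inj: "inj_on (?g w) (A S)" for w
  proof (rule inj_onI)
    fix x y assume "?g w x = ?g w y"
    then have "x \<circ> sw v w \<circ> sw v w = y \<circ> sw v w \<circ> sw v w" by simp
    then show "x = y" by (simp add: comp_def)
  qed
  have disj: "?g w1 ` A S \<inter> ?g w2 ` A S = {}" if w: "w1 \<in> D v" "w2 \<in> D v" "w1 \<noteq> w2" for w1 w2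
  proof (rule ccontr)
    assume "?g w1 ` A S \<inter> ?g w2 ` A S \<noteq> {}"
    then obtain l1 l2 where l: "l1 \<in> A S" "l2 \<in> A S" "?g w1 l1 = ?g w2 l2" by blast
    define f where "f = ?g w1 l1"
    have wI: "w1 \<in> I" "w2 \<in> I" "R w1 v" "R w2 v" using w by (auto simp: D_def)
    have pv1: "prp l1 v" and pv2: "prp l2 v" using l S by (auto simp: A_def)
    have "f w1 \<le> f w2"
    proof -
      have "sw v w1 w2 \<in> I" "R (sw v w1 w2) v" using wI vI rfl[of v] by (auto simp: sw_def)
      then have "l1 v \<le> l1 (sw v w1 w2)" using pv1 by (auto simp: prp_def)
      then show ?thesis using w(3) by (auto simp: f_def sw_def split: if_splits)
    qed
    moreover have "f w2 \<le> f w1"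
    proof -
      have "sw v w2 w1 \<in> I" "R (sw v w2 w1) v" using wI vI rfl[of v] by (auto simp: sw_def)
      then have "l2 v \<le> l2 (sw v w2 w1)" using pv2 by (auto simp: prp_def)
      then show ?thesis using l(3) w(3) by (auto simp: f_def sw_def fun_eq_iff split: if_splits)
    qed
    ultimately have "f w1 = f w2" by simp
    moreover have "f \<in> Labs I" using Labs_sw[of l1 I v w1] l wI vI by (auto simp: A_def f_def)
    ultimately show False using wI w(3) by (auto simp: Labs_def bij_betw_def inj_on_def)
  qed
  have "card (A (S - {v})) = (\<Sum>w\<in>D v. card (?g w ` A S))"
    unfolding eq by (rule card_UN_disjoint) (use finD finA disj in auto)
  also have "\<dots> = (\<Sum>w\<in>D v. card (A S))" using inj by (simp add: card_image)
  finally show ?thesis by simp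
qed

lemma main: "S \<subseteq> I \<Longrightarrow> card (A S) * (\<Prod>v\<in>S. card (D v)) = fact (card I)"
proof (induction "card S" arbitrary: S rule: less_induct)
  case less
  show ?case
  proof (cases "S = {}")
    case True
    have "A {} = Labs I" by (simp add: A_def)
    then show ?thesis using True card_Labs[OF fin] by simp
  next
    case False
    then obtain v0 where "v0 \<in> S" by blast
    then obtain v where v: "v \<in> S" and vmin: "\<forall>y. y \<in> S \<longrightarrow> card (D v) \<le> card (D y)"
      using ex_has_least_nat[of "\<lambda>x. x \<in> S" v0 "\<lambda>x. card (D x)"] by blast
    have finS: "finite S" using less.prems fin finite_subset by blast
    have minv: "\<forall>s\<in>S. R s v \<longrightarrow> s = v"
    proof (intro ballI impI, rule ccontr)
      fix s assume s: "s \<in> S" "R s v" "s \<noteq> v"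
      have sI: "s \<in> I" "v \<in> I" using s v less.prems by auto
      have "D s \<subseteq> D v" using trns[of _ s v] s sI by (auto simp: D_def)
      moreover have "v \<notin> D s" using asym[of v s] s sI by (auto simp: D_def)
      moreover have "v \<in> D v" using rfl sI by (auto simp: D_def)
      ultimately have "D s \<subset> D v" by blast
      then have "card (D s) < card (D v)" by (rule psubset_card_mono[OF finD])
      then show False using vmin s by force
    qed
    have IH: "card (A (S - {v})) * (\<Prod>u\<in>S-{v}. card (D u)) = fact (card I)"
      using less.hyps[of "S - {v}"] less.prems v finS by (meson Diff_subset card_Diff1_less subset_trans)
    have "(\<Prod>u\<in>S. card (D u)) = card (D v) * (\<Prod>u\<in>S-{v}. card (D u))"
      using v finS by (simp add: prod.remove)
    then show ?thesis using IH step[OF less.prems v minv] by (simp add: ac_simps)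
  qed
qed


lemma finLabs: "finite (Labs I)" using card_Labs[OF fin] by (simp add: card_ge_0_finite)

lemma prod_ind: "finite X \<Longrightarrow> (\<Prod>x\<in>X. if P x then 1 else (0::real)) = (if \<forall>x\<in>X. P x then 1 else 0)"
  by (induction X rule: finite_induct) auto

lemma sum_formula:
  fixes c e :: "'a \<Rightarrow> real"
  shows "(\<Sum>lab\<in>Labs I. \<Prod>v\<in>I. e v * (if prp lab v then 1 else 0) + c v)
       = fact (card I) * (\<Prod>v\<in>I. e v / real (card (D v)) + c v)"
proof -
  have finX: "X \<in> Pow I \<Longrightarrow> finite X" for X using fin finite_subset by auto
  have cardA: "real (card (A X)) = fact (card I) / (\<Prod>v\<in>X. real (card (D v)))" if "X \<in> Pow I" for X
  proof -
    have "real (card (A X)) * (\<Prod>v\<in>X. real (card (D v))) = fact (card I)"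
      using main[of X] that by (simp flip: of_nat_prod of_nat_mult)
    moreover have "(\<Prod>v\<in>X. real (card (D v))) \<noteq> 0"
      using that cardD_pos finX[OF that] by (subst prod_zero_iff) fastforce+
    ultimately show ?thesis by (simp add: field_simps)
  qed
  have "(\<Sum>lab\<in>Labs I. \<Prod>v\<in>I. e v * (if prp lab v then 1 else 0) + c v)
     = (\<Sum>lab\<in>Labs I. \<Sum>X\<in>Pow I. (\<Prod>v\<in>X. e v * (if prp lab v then 1 else 0)) * (\<Prod>v\<in>I-X. c v))"
    by (simp add: prod_add[OF fin])
  also have "\<dots> = (\<Sum>lab\<in>Labs I. \<Sum>X\<in>Pow I. (\<Prod>v\<in>X. e v) * (\<Prod>v\<in>I-X. c v) * (if \<forall>v\<in>X. prp lab v then 1 else 0))"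
    by (intro sum.cong refl) (simp add: prod.distrib prod_ind finX)
  also have "\<dots> = (\<Sum>X\<in>Pow I. \<Sum>lab\<in>Labs I. (\<Prod>v\<in>X. e v) * (\<Prod>v\<in>I-X. c v) * (if \<forall>v\<in>X. prp lab v then 1 else 0))"
    by (rule sum.swap)
  also have "\<dots> = (\<Sum>X\<in>Pow I. (\<Prod>v\<in>X. e v) * (\<Prod>v\<in>I-X. c v) * real (card (A X)))"
  proof (intro sum.cong refl)
    fix X
    have "(\<Sum>lab\<in>Labs I. (if \<forall>v\<in>X. prp lab v then 1 else 0::real)) = real (card (A X))"
      using sum.inter_filter[OF finLabs, of "\<lambda>_. 1::real" "\<lambda>lab. \<forall>v\<in>X. prp lab v"]
      by (simp add: A_def)
    then show "(\<Sum>lab\<in>Labs I. (\<Prod>v\<in>X. e v) * (\<Prod>v\<in>I-X. c v) * (if \<forall>v\<in>X. prp lab v then 1 else 0))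
        = (\<Prod>v\<in>X. e v) * (\<Prod>v\<in>I-X. c v) * real (card (A X))"
      by (simp add: sum_distrib_left[symmetric])
  qed
  also have "\<dots> = (\<Sum>X\<in>Pow I. fact (card I) * ((\<Prod>v\<in>X. e v / real (card (D v))) * (\<Prod>v\<in>I-X. c v)))"
    by (intro sum.cong refl) (simp add: cardA prod_dividef)
  also have "\<dots> = fact (card I) * (\<Prod>v\<in>I. e v / real (card (D v)) + c v)"
    by (simp add: prod_add[OF fin] sum_distrib_left)
  finally show ?thesis .
qed

end



fun nn :: "ptree \<Rightarrow> nat" where
  "nn (Node cs) = Suc (sum_list (map nn cs))"

definition P :: "ptree \<Rightarrow> nat list set" where "P t = {p. tget t p \<noteq> None}"

lemma P_Node: "P (Node cs) = insert [] (\<Union>i<length cs. (Cons i) ` P (cs!i))"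
proof (rule set_eqI)
  fix p show "p \<in> P (Node cs) \<longleftrightarrow> p \<in> insert [] (\<Union>i<length cs. (Cons i) ` P (cs!i))"
  proof (cases p)
    case (Cons i q)
    show ?thesis unfolding Cons by (auto simp: P_def)
  qed (simp add: P_def)
qed

lemma P_fin_card: "finite (P t) \<and> card (P t) = nn t"
proof (induction t)
  case (Node cs)
  have IH: "i < length cs \<Longrightarrow> finite (P (cs!i)) \<and> card (P (cs!i)) = nn (cs!i)" for i
    using Node by auto
  let ?U = "\<Union>i<length cs. (Cons i) ` P (cs!i)"
  have fU: "finite ?U" using IH by auto
  have "card ?U = (\<Sum>i<length cs. card ((Cons i) ` P (cs!i)))"
    by (rule card_UN_disjoint) (use IH in auto)
  also have "\<dots> = (\<Sum>i<length cs. nn (cs!i))"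
    by (intro sum.cong refl) (simp add: card_image IH)
  also have "\<dots> = sum_list (map nn cs)"
    by (simp add: sum_list_sum_nth atLeast0LessThan)
  finally have "card ?U = sum_list (map nn cs)" .
  moreover have "[] \<notin> ?U" by auto
  ultimately show ?case using fU by (simp add: P_Node)
qed

lemma verts_P: "verts F = P (Node F) - {[]}" by (auto simp: verts_def P_def)

lemma fin_verts: "finite (verts F)" using P_fin_card by (simp add: verts_P)

lemma card_verts: "card (verts F) = sum_list (map nn F)"
proof -
  have "[] \<in> P (Node F)" by (simp add: P_def)
  then show ?thesis using P_fin_card[of "Node F"] by (simp add: verts_P)
qed

lemma nn_pos: "nn t \<ge> 1" by (cases t) auto

lemma len_le: "length F \<le> sum_list (map nn F)"
proof (induction F)
  case (Cons a F)
  then show ?case using nn_pos[of a] by simp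
qed simp

lemma fin_nn: "finite {t. nn t \<le> N}"
proof (induction N)
  case 0 have "{t. nn t \<le> 0} = {}" using nn_pos by (metis (no_types, lifting) Collect_empty_eq le_zero_eq not_one_le_zero)
  then show ?case by (simp only: finite.emptyI)
next
  case (Suc N)
  have "{t. nn t \<le> Suc N} \<subseteq> Node ` {cs. set cs \<subseteq> {t. nn t \<le> N} \<and> length cs \<le> N}"
  proof
    fix t assume t: "t \<in> {t. nn t \<le> Suc N}"
    obtain cs where cs: "t = Node cs" by (cases t)
    have s: "sum_list (map nn cs) \<le> N" using t cs by simp
    have "set cs \<subseteq> {t. nn t \<le> N}"
      using s member_le_sum_list[of _ "map nn cs"] by force
    moreover have "length cs \<le> N" using len_le[of cs] s by simp
    ultimately show "t \<in> Node ` {cs. set cs \<subseteq> {t. nn t \<le> N} \<and> length cs \<le> N}" using cs by blast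
  qed
  moreover have "finite (Node ` {cs. set cs \<subseteq> {t. nn t \<le> N} \<and> length cs \<le> N})"
    using finite_lists_length_le[OF Suc.IH] by blast
  ultimately show ?case by (rule finite_subset)
qed

lemma fin_forests_N: "finite {F. sum_list (map nn F) = N}"
proof -
  have "{F. sum_list (map nn F) = N} \<subseteq> {cs. set cs \<subseteq> {t. nn t \<le> N} \<and> length cs \<le> N}"
  proof
    fix F assume F: "F \<in> {F. sum_list (map nn F) = N}"
    have "set F \<subseteq> {t. nn t \<le> N}"
    proof
      fix t assume "t \<in> set F"
      then have "nn t \<le> sum_list (map nn F)" using member_le_sum_list[of "nn t" "map nn F"] by simp
      then show "t \<in> {t. nn t \<le> N}" using F by simp
    qed
    moreover have "length F \<le> N" using len_le[of F] F by simp
    ultimately show "F \<in> {cs. set cs \<subseteq> {t. nn t \<le> N} \<and> length cs \<le> N}" by simp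
  qed
  then show ?thesis by (rule finite_subset) (rule finite_lists_length_le[OF fin_nn])
qed

lemma verts_decomp:
  assumes "has_type F r"
  shows "verts F = (\<Union>i\<in>{d. r d \<noteq> 0}. {v \<in> verts F. deg F v = i})"
proof -
  have "v \<in> verts F \<Longrightarrow> r (deg F v) \<noteq> 0" for v
  proof -
    assume v: "v \<in> verts F"
    have "card {w \<in> verts F. deg F w = deg F v} \<noteq> 0"
      using v fin_verts by (subst card_0_eq) auto
    then show ?thesis using assms by (simp add: has_type_def)
  qed
  then show ?thesis by auto
qed

lemma deg_supp: "has_type F r \<Longrightarrow> v \<in> verts F \<Longrightarrow> r (deg F v) \<noteq> 0"
  by (drule verts_decomp) blast

lemma card_verts_type:
  assumes "has_type F r" "finite {d. r d \<noteq> 0}"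
  shows "card (verts F) = (\<Sum>d\<in>{d. r d \<noteq> 0}. r d)"
proof -
  have "card (verts F) = (\<Sum>i\<in>{d. r d \<noteq> 0}. card {v \<in> verts F. deg F v = i})"
    by (subst verts_decomp[OF assms(1)], rule card_UN_disjoint) (use assms fin_verts in auto)
  then show ?thesis using assms(1) by (simp add: has_type_def)
qed

lemma card_internal_type:
  assumes "has_type F r" "finite {d. r d \<noteq> 0}"
  shows "card (internal F) = num_internal r"
proof -
  have "internal F = (\<Union>i\<in>{d. 1 \<le> d \<and> r d \<noteq> 0}. {v \<in> verts F. deg F v = i})"
    using deg_supp[OF assms(1)] by (auto simp: internal_def)
  moreover have "finite {d. 1 \<le> d \<and> r d \<noteq> 0}" using assms(2) by (rule rev_finite_subset) auto
  ultimately have "card (internal F) = (\<Sum>i\<in>{d. 1 \<le> d \<and> r d \<noteq> 0}. card {v \<in> verts F. deg F v = i})"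
    by (simp only:) (rule card_UN_disjoint, auto simp: fin_verts)
  then show ?thesis using assms(1) by (simp add: has_type_def num_internal_def)
qed

lemma fin_forests:
  assumes "finite {d. r d \<noteq> 0}"
  shows "finite (forests r)"
proof -
  have "forests r \<subseteq> {F. sum_list (map nn F) = (\<Sum>d\<in>{d. r d \<noteq> 0}. r d)}"
    using card_verts_type[OF _ assms] card_verts by (auto simp: forests_def)
  then show ?thesis by (rule finite_subset) (rule fin_forests_N)
qed

lemma forest_ord_F: "forest_ord (internal F) desc"
proof
  show "finite (internal F)" using fin_verts by (simp add: internal_def)
next
  fix x v w assume a1: "desc x v" and a2: "desc x w"
  from a1 obtain a where "x = v @ a" unfolding desc_def by blast
  moreover from a2 obtain b where "x = w @ b" unfolding desc_def by blast
  ultimately have "v @ a = w @ b" by simp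
  then show "desc v w \<or> desc w v" unfolding desc_def append_eq_append_conv2 by blast
next
  fix v assume "v \<in> internal F" then show "desc v v" by (simp add: desc_def)
next
  fix u v w assume "desc u v" "desc v w" then show "desc u w" unfolding desc_def by (metis append.assoc)
next
  fix v w assume "desc v w" "desc w v" then show "v = w" unfolding desc_def by (metis append.assoc append_self_conv append_is_Nil_conv)
qed

lemma card_allowed: "card (allowed k F lab v) = deg F v + (if proper F lab v then 0 else k)"
proof -
  have e1: "{C i | i. 1 \<le> i \<and> i \<le> deg F v} = C ` {1..deg F v}" by auto
  have e2: "{C' j | j. 1 \<le> j \<and> j \<le> k} = C' ` {1..k}" by auto
  have c1: "card (C ` {1..deg F v}) = deg F v" by (simp add: card_image inj_on_def)
  have c2: "card (C' ` {1..k}) = k" by (simp add: card_image inj_on_def)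
  have "C ` {1..deg F v} \<inter> C' ` {1..k} = {}" by auto
  then show ?thesis unfolding allowed_def e1 e2 using c1 c2
    by (cases "proper F lab v") (simp_all add: card_Un_disjoint)
qed



lemma fin_allowed: "finite (allowed k F lab v)"
proof -
  have e1: "{C i | i. 1 \<le> i \<and> i \<le> deg F v} = C ` {1..deg F v}" by auto
  have e2: "{C' j | j. 1 \<le> j \<and> j \<le> k} = C' ` {1..k}" by auto
  show ?thesis unfolding allowed_def e1 e2 by simp
qed

theorem lemma3p1:
  fixes r :: "nat \<Rightarrow> nat" and k :: nat
  assumes "finite {d. r d \<noteq> 0}"
  shows "real (card (CF r k)) =
    (\<Sum>F \<in> forests r. fact (num_internal r) *
        (\<Prod>v \<in> internal F. (real (deg F v + k) - real k / real (hook F v))))"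
proof -
  define L where "L F = {lab. lab \<in> extensional (internal F) \<and> bij_betw lab (internal F) {1..num_internal r}}" for F
  have LL: "F \<in> forests r \<Longrightarrow> L F = Labs (internal F)" for F
    using card_internal_type[OF _ assms] by (auto simp: L_def Labs_def forests_def)
  have finL: "F \<in> forests r \<Longrightarrow> finite (L F)" for F
    using LL forest_ord.finLabs[OF forest_ord_F] by simp
  have finI: "finite (internal F)" for F using forest_ord.fin[OF forest_ord_F] .
  have CFeq: "CF r k = Sigma (forests r) (\<lambda>F. Sigma (L F) (\<lambda>lab. PiE (internal F) (allowed k F lab)))"
    by (auto simp: CF_def L_def)
  have "card (CF r k) = (\<Sum>F\<in>forests r. \<Sum>lab\<in>L F. \<Prod>v\<in>internal F. card (allowed k F lab v))"
    unfolding CFeq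
    using fin_forests[OF assms] finL finI fin_allowed
    by (simp add: card_SigmaI finite_PiE card_PiE)
  then have "real (card (CF r k)) = (\<Sum>F\<in>forests r. \<Sum>lab\<in>L F. \<Prod>v\<in>internal F. real (card (allowed k F lab v)))"
    by simp
  also have "\<dots> = (\<Sum>F \<in> forests r. fact (num_internal r) *
        (\<Prod>v \<in> internal F. (real (deg F v + k) - real k / real (hook F v))))"
  proof (rule sum.cong[OF refl])
    fix F assume F: "F \<in> forests r"
    interpret fo: forest_ord "internal F" desc by (rule forest_ord_F)
    have "(\<Sum>lab\<in>L F. \<Prod>v\<in>internal F. real (card (allowed k F lab v)))
        = (\<Sum>lab\<in>Labs (internal F). \<Prod>v\<in>internal F. (- real k) * (if fo.prp lab v then 1 else 0) + real (deg F v + k))"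
      unfolding LL[OF F]
      by (intro sum.cong refl prod.cong) (auto simp: card_allowed fo.prp_def proper_def)
    also have "\<dots> = fact (card (internal F)) * (\<Prod>v\<in>internal F. (- real k) / real (card (fo.D v)) + real (deg F v + k))"
      by (rule fo.sum_formula)
    also have "\<dots> = fact (num_internal r) * (\<Prod>v \<in> internal F. (real (deg F v + k) - real k / real (hook F v)))"
      using card_internal_type[OF _ assms, of F] F
      by (simp add: forests_def fo.D_def hook_def)
    finally show "(\<Sum>lab\<in>L F. \<Prod>v\<in>internal F. real (card (allowed k F lab v))) = fact (num_internal r) * (\<Prod>v \<in> internal F. (real (deg F v + k) - real k / real (hook F v)))" .
  qed
  finally show ?thesis .
qed

end
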